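(* Let $\kappa\in[1,2]$. There exists a real-valued function $h\in C_c^\infty(\mathbb R)$ with support contained in $[0,\infty)$ such that $$\int_{-1}^{1}\overline{\widehat h(-\xi)}\,\widehat h(\xi)\,\frac{d\xi}{\xi^2+\kappa}<0.$$
   Context: $\widehat h(\xi)=\int_{\mathbb R}h(x)e^{i\xi x}\,dx$ denotes the Fourier transform (the sign convention in the exponent is immaterial here). *)

theory Defs
  imports "HOL-Analysis.Analysis"
begin

definition smooth_real :: "(real \<Rightarrow> real) \<Rightarrow> bool" where
  "smooth_real f \<longleftrightarrow> (\<exists>D :: nat \<Rightarrow> real \<Rightarrow> real. D 0 = f \<and>
      (\<forall>n x. (D n has_real_derivative D (Suc n) x) (at x)))"

definition tsupp :: "(real \<Rightarrow> real) \<Rightarrow> real set" where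
  "tsupp f = closure {x. f x \<noteq> 0}"

definition fourier :: "(real \<Rightarrow> real) \<Rightarrow> real \<Rightarrow> complex" where
  "fourier h \<xi> = integral UNIV (\<lambda>x. complex_of_real (h x) * exp (\<i> * complex_of_real (\<xi> * x)))"

end

theory Submission
  imports Defs "HOL-Computational_Algebra.Polynomial"
begin

lemma smooth_closure:
  assumes "f \<in> T" and cl: "\<And>u. u \<in> T \<Longrightarrow> \<exists>v\<in>T. \<forall>x. (u has_real_derivative v x) (at x)"
  shows "smooth_real f"
proof -
  obtain nx where nx: "\<And>u. u \<in> T \<Longrightarrow> nx u \<in> T \<and> (\<forall>x. (u has_real_derivative nx u x) (at x))"
    using cl by metis
  define D where "D n = (nx ^^ n) f" for n
  have DT: "D n \<in> T" for n
    by (induction n) (auto simp: D_def assms(1) nx)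
  show ?thesis unfolding smooth_real_def
    by (rule exI[of _ D]) (auto simp: D_def nx DT[unfolded D_def])
qed

lemma smooth_deriv:
  assumes "smooth_real f"
  shows "\<exists>f'. smooth_real f' \<and> (\<forall>x. (f has_real_derivative f' x) (at x))"
proof -
  obtain D where D: "D 0 = f" "\<And>n x. (D n has_real_derivative D (Suc n) x) (at x)"
    using assms unfolding smooth_real_def by blast
  have "smooth_real (D 1)" unfolding smooth_real_def
    by (rule exI[of _ "\<lambda>n. D (Suc n)"]) (auto simp: D)
  then show ?thesis using D by (metis One_nat_def)
qed

definition dv :: "(real \<Rightarrow> real) \<Rightarrow> real \<Rightarrow> real" where
  "dv u = (SOME v. smooth_real v \<and> (\<forall>x. (u has_real_derivative v x) (at x)))"

lemma dv:
  assumes "smooth_real u"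
  shows "smooth_real (dv u)" "\<And>x. (u has_real_derivative dv u x) (at x)"
  using someI_ex[OF smooth_deriv[OF assms]] unfolding dv_def by blast+

definition sp :: "((real \<Rightarrow> real) \<times> (real \<Rightarrow> real)) list \<Rightarrow> real \<Rightarrow> real" where
  "sp ps x = (\<Sum>p\<leftarrow>ps. fst p x * snd p x)"

definition dps :: "((real \<Rightarrow> real) \<times> (real \<Rightarrow> real)) list \<Rightarrow> ((real \<Rightarrow> real) \<times> (real \<Rightarrow> real)) list" where
  "dps ps = concat (map (\<lambda>p. [(dv (fst p), snd p), (fst p, dv (snd p))]) ps)"

lemma sp_deriv:
  assumes "\<forall>p\<in>set ps. smooth_real (fst p) \<and> smooth_real (snd p)"
  shows "(sp ps has_real_derivative sp (dps ps) x) (at x)"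
  using assms
proof (induction ps)
  case Nil
  then show ?case by (simp add: sp_def dps_def)
next
  case (Cons p ps)
  have 1: "(sp ps has_real_derivative sp (dps ps) x) (at x)" using Cons by auto
  have 2: "((\<lambda>x. fst p x * snd p x) has_real_derivative
      dv (fst p) x * snd p x + fst p x * dv (snd p) x) (at x)"
    using Cons.prems dv[of "fst p"] dv[of "snd p"]
    by (auto intro!: derivative_eq_intros)
  have e1: "sp (p # ps) = (\<lambda>x. fst p x * snd p x + sp ps x)"
    by (auto simp: sp_def)
  have e2: "sp (dps (p # ps)) x = dv (fst p) x * snd p x + fst p x * dv (snd p) x + sp (dps ps) x"
    by (simp add: sp_def dps_def)
  show ?case unfolding e1 e2 using 1 2 by (intro DERIV_add)
qed

lemma smooth_mult:
  assumes "smooth_real f" "smooth_real g"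
  shows "smooth_real (\<lambda>x. f x * g x)"
proof -
  define T where "T = {sp ps | ps. \<forall>p\<in>set ps. smooth_real (fst p) \<and> smooth_real (snd p)}"
  have "sp [(f, g)] \<in> T" using assms unfolding T_def by auto
  moreover have "sp [(f, g)] = (\<lambda>x. f x * g x)" by (auto simp: sp_def)
  moreover have "\<exists>v\<in>T. \<forall>x. (u has_real_derivative v x) (at x)" if "u \<in> T" for u
  proof -
    obtain ps where ps: "u = sp ps" "\<forall>p\<in>set ps. smooth_real (fst p) \<and> smooth_real (snd p)"
      using \<open>u \<in> T\<close> unfolding T_def by auto
    have "\<forall>p\<in>set (dps ps). smooth_real (fst p) \<and> smooth_real (snd p)"
      using ps(2) dv by (auto simp: dps_def)
    then show ?thesis using sp_deriv[OF ps(2)] ps(1) unfolding T_def by blast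
  qed
  ultimately show ?thesis using smooth_closure[of _ T] by metis
qed

lemma smooth_affine:
  assumes "smooth_real f"
  shows "smooth_real (\<lambda>x. f (a * x + b))"
proof -
  obtain D where D: "D 0 = f" "\<And>n x. (D n has_real_derivative D (Suc n) x) (at x)"
    using assms unfolding smooth_real_def by blast
  show ?thesis unfolding smooth_real_def
  proof (rule exI[of _ "\<lambda>n x. a ^ n * D n (a * x + b)"], safe)
    fix n x
    have "((\<lambda>x. D n (a * x + b)) has_real_derivative D (Suc n) (a * x + b) * a) (at x)"
      by (rule DERIV_chain2[OF D(2)]) (auto intro!: derivative_eq_intros)
    then show "((\<lambda>x. a ^ n * D n (a * x + b)) has_real_derivative a ^ Suc n * D (Suc n) (a * x + b)) (at x)"
      by (auto intro!: derivative_eq_intros simp: algebra_simps)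
  qed (auto simp: D)
qed



lemma poly_exp_lim: "((\<lambda>x::real. poly P (1/x) * exp (-1/x)) \<longlongrightarrow> 0) (at_right 0)"
proof -
  have "((\<lambda>t::real. poly P t * exp (-t)) \<longlongrightarrow> 0) at_top"
  proof -
    have e: "poly P t * exp (-t) = (\<Sum>i\<le>degree P. coeff P i * (t ^ i / exp t))" for t :: real
      by (simp add: poly_altdef sum_distrib_right exp_minus divide_inverse mult.assoc)
    have "((\<lambda>t::real. \<Sum>i\<le>degree P. coeff P i * (t ^ i / exp t)) \<longlongrightarrow> (\<Sum>i\<le>degree P. coeff P i * 0)) at_top"
      by (intro tendsto_sum tendsto_mult tendsto_const tendsto_power_div_exp_0)
    then show ?thesis unfolding e by simp
  qed
  from filterlim_compose[OF this filterlim_inverse_at_top_right]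
  show ?thesis by (simp add: divide_inverse exp_minus)
qed

definition f0 :: "real \<Rightarrow> real" where
  "f0 x = (if x > 0 then exp (-1/x) else 0)"

definition fP :: "real poly \<Rightarrow> real \<Rightarrow> real" where
  "fP P x = (if x > 0 then poly P (1/x) * exp (-1/x) else 0)"

lemma fP_pos_deriv:
  fixes x :: real assumes 1: "x > 0"
  shows "((\<lambda>x. poly P (1/x) * exp (-1/x)) has_real_derivative fP ([:0,0,1:] * (P - pderiv P)) x) (at x)"
proof -
  have d1: "((\<lambda>x. 1/x) has_real_derivative (- ((1/x)^2))) (at x)"
    using DERIV_inverse[of x UNIV] 1 by (simp add: divide_inverse power2_eq_square)
  have d2: "((\<lambda>x. -1/x) has_real_derivative ((1/x)^2)) (at x)"
    using DERIV_minus[OF d1] by (simp add: divide_inverse)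
  have d3: "((\<lambda>x. poly P (1/x)) has_real_derivative poly (pderiv P) (1/x) * (- ((1/x)^2))) (at x)"
    by (rule DERIV_chain2[OF poly_DERIV d1])
  have d4: "((\<lambda>x. exp (-1/x)) has_real_derivative exp (-1/x) * ((1/x)^2)) (at x)"
    by (rule DERIV_chain2[OF DERIV_exp d2])
  have d5: "((\<lambda>x. poly P (1/x) * exp (-1/x)) has_real_derivative
      poly (pderiv P) (1/x) * (- ((1/x)^2)) * exp (-1/x) + exp (-1/x) * ((1/x)^2) * poly P (1/x)) (at x)"
    using DERIV_mult[OF d3 d4] by (simp add: algebra_simps)
  have "poly (pderiv P) (1/x) * (- ((1/x)^2)) * exp (-1/x) + exp (-1/x) * ((1/x)^2) * poly P (1/x)
        = fP ([:0,0,1:] * (P - pderiv P)) x"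
    using 1 by (simp add: fP_def power2_eq_square field_simps)
  with d5 show ?thesis by simp
qed

lemma fP_deriv:
  "(fP P has_real_derivative fP ([:0,0,1:] * (P - pderiv P)) x) (at x)"
proof -
  consider "x > 0" | "x < 0" | "x = 0" by linarith
  then show ?thesis
  proof cases
    case 1
    have d: "((\<lambda>x. poly P (1/x) * exp (-1/x)) has_real_derivative fP ([:0,0,1:] * (P - pderiv P)) x) (at x)"
      using fP_pos_deriv[OF 1] .
    show ?thesis
      by (rule has_field_derivative_transform_within_open[OF d, of "{0<..}"]) (use 1 in \<open>simp_all add: fP_def\<close>)
  next
    case 2
    have z: "fP ([:0,0,1:] * (P - pderiv P)) x = 0" using 2 by (simp add: fP_def)
    show ?thesis unfolding z
      by (rule has_field_derivative_transform_within_open[OF DERIV_const[of 0 "at x"], of "{..<0}"])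
         (use 2 in \<open>simp_all add: fP_def\<close>)
  next
    case 3
    have "((\<lambda>y. (fP P y - fP P 0) / (y - 0)) \<longlongrightarrow> 0) (at 0)"
    proof (rule filterlim_split_at)
      have "eventually (\<lambda>y. y \<in> {-1<..<0}) (at_left (0::real))"
        by (rule eventually_at_left_real) simp
      then have "eventually (\<lambda>y. (fP P y - fP P 0) / (y - 0) = 0) (at_left (0::real))"
        by eventually_elim (auto simp: fP_def)
      then show "((\<lambda>y. (fP P y - fP P 0) / (y - 0)) \<longlongrightarrow> 0) (at_left 0)"
        by (rule tendsto_eventually)
    next
      have "eventually (\<lambda>y. y \<in> {0<..<1}) (at_right (0::real))"
        by (rule eventually_at_right_real) simp
      then have "eventually (\<lambda>y. poly (pCons 0 P) (1/y) * exp (-1/y) = (fP P y - fP P 0) / (y - 0)) (at_right (0::real))"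
        by eventually_elim (auto simp: fP_def)
      then show "((\<lambda>y. (fP P y - fP P 0) / (y - 0)) \<longlongrightarrow> 0) (at_right 0)"
        by (rule Lim_transform_eventually[OF poly_exp_lim[of "pCons 0 P"]])
    qed
    then show ?thesis using 3 by (simp add: has_field_derivative_iff fP_def)
  qed
qed

lemma smooth_f0: "smooth_real f0"
proof -
  have "fP 1 \<in> range fP" by simp
  moreover have "fP 1 = f0" by (auto simp: fP_def f0_def)
  ultimately show ?thesis
    using smooth_closure[of "fP 1" "range fP"] fP_deriv by fastforce
qed



definition gb :: "real \<Rightarrow> real" where
  "gb x = f0 x * f0 (1/2 - x)"

definition hb :: "real \<Rightarrow> real" where
  "hb = dv gb"

lemma smooth_gb: "smooth_real gb"
proof -
  have "smooth_real (\<lambda>x. f0 ((-1) * x + 1/2))" by (rule smooth_affine[OF smooth_f0])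
  then have "smooth_real (\<lambda>x. f0 (1/2 - x))" by simp
  from smooth_mult[OF smooth_f0 this] show ?thesis unfolding gb_def[abs_def] .
qed

lemma smooth_hb: "smooth_real hb" and hb_deriv: "(gb has_real_derivative hb x) (at x)"
  using dv[OF smooth_gb] unfolding hb_def by auto

lemma gb_nonneg: "gb x \<ge> 0"
  by (simp add: gb_def f0_def)

lemma gb_zero: "x \<le> 0 \<or> x \<ge> 1/2 \<Longrightarrow> gb x = 0"
  by (auto simp: gb_def f0_def)

lemma gb_pos: "0 < x \<Longrightarrow> x < 1/2 \<Longrightarrow> gb x > 0"
  by (simp add: gb_def f0_def)

lemma hb_zero:
  assumes "x < 0 \<or> x > 1/2" shows "hb x = 0"
proof -
  define S where "S = {..<(0::real)} \<union> {1/2<..}"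
  have "open S" "x \<in> S" using assms by (auto simp: S_def)
  have "(gb has_real_derivative 0) (at x)"
    by (rule has_field_derivative_transform_within_open[OF DERIV_const[of 0 "at x"] \<open>open S\<close> \<open>x \<in> S\<close>])
       (auto simp: S_def gb_zero)
  with hb_deriv show ?thesis by (rule DERIV_unique)
qed

lemma supp_sub: "{x. hb x \<noteq> 0} \<subseteq> {0..1/2}"
proof
  fix x assume "x \<in> {x. hb x \<noteq> 0}"
  then show "x \<in> {0..1/2}" using hb_zero[of x] by (cases "x < 0 \<or> x > 1/2") auto
qed

lemma tsupp_hb: "tsupp hb \<subseteq> {0..1/2}"
  unfolding tsupp_def
  by (rule closure_minimal[OF supp_sub]) simp

lemma compact_tsupp_hb: "compact (tsupp hb)"
  unfolding tsupp_def compact_closure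
  by (rule bounded_subset[OF _ supp_sub]) simp

lemma cont_gb: "continuous_on S gb"
  using hb_deriv by (intro continuous_at_imp_continuous_on) (auto intro: DERIV_isCont)

lemma cont_hb: "continuous_on S hb"
proof -
  obtain h' where "\<And>x. (hb has_real_derivative h' x) (at x)"
    using smooth_deriv[OF smooth_hb] by blast
  then show ?thesis by (intro continuous_at_imp_continuous_on) (auto intro: DERIV_isCont)
qed



definition E :: "real \<Rightarrow> real \<Rightarrow> complex" where
  "E \<xi> x = exp (\<i> * complex_of_real (\<xi> * x))"

definition ghat :: "real \<Rightarrow> complex" where
  "ghat \<xi> = integral {0..1/2} (\<lambda>x. complex_of_real (gb x) * E \<xi> x)"

lemma cont_E: "continuous_on S (E \<xi>)"
  unfolding E_def by (intro continuous_intros)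

lemma cont_gE: "continuous_on S (\<lambda>x. complex_of_real (gb x) * E \<xi> x)"
  using cont_gb cont_E by (intro continuous_intros) (auto intro: continuous_on_of_real)

lemma cont_hE: "continuous_on S (\<lambda>x. complex_of_real (hb x) * E \<xi> x)"
  using cont_hb cont_E by (intro continuous_intros) (auto intro: continuous_on_of_real)

lemma E_deriv: "(E \<xi> has_vector_derivative (E \<xi> x * (\<i> * complex_of_real \<xi>))) (at x within S)"
proof -
  have "((\<lambda>z. exp (\<i> * (complex_of_real \<xi> * z))) has_field_derivative
      exp (\<i> * (complex_of_real \<xi> * complex_of_real x)) * (\<i> * complex_of_real \<xi>)) (at (complex_of_real x))"
    by (auto intro!: derivative_eq_intros)
  from has_vector_derivative_real_field[OF this, of S]
  show ?thesis unfolding E_def by (simp add: of_real_mult[symmetric] del: of_real_mult)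
qed

lemma fourier_hb_interval:
  "fourier hb \<xi> = integral {0..1/2} (\<lambda>x. complex_of_real (hb x) * E \<xi> x)"
proof -
  have eq: "(\<lambda>x. complex_of_real (hb x) * exp (\<i> * complex_of_real (\<xi> * x))) =
      (\<lambda>x. if x \<in> {0..1/2} then complex_of_real (hb x) * E \<xi> x else 0)"
    using hb_zero by (auto simp: E_def fun_eq_iff not_le)
  show ?thesis unfolding fourier_def eq by (rule integral_restrict_UNIV)
qed

lemma fourier_hb: "fourier hb \<xi> = - (\<i> * complex_of_real \<xi>) * ghat \<xi>"
proof -
  let ?F = "\<lambda>x. complex_of_real (gb x) * E \<xi> x"
  have "((\<lambda>x. ?F x * (\<i> * complex_of_real \<xi>) + complex_of_real (hb x) * E \<xi> x)
      has_integral (?F (1/2) - ?F 0)) {0..1/2}"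
  proof (rule fundamental_theorem_of_calculus)
    fix x :: real assume "x \<in> {0..1/2}"
    have "(?F has_vector_derivative
        complex_of_real (gb x) * (E \<xi> x * (\<i> * complex_of_real \<xi>)) + complex_of_real (hb x) * E \<xi> x) (at x within {0..1/2})"
      by (rule has_vector_derivative_mult[OF has_vector_derivative_of_real E_deriv],
          rule has_field_derivative_at_within[OF hb_deriv])
    then show "(?F has_vector_derivative ?F x * (\<i> * complex_of_real \<xi>) + complex_of_real (hb x) * E \<xi> x) (at x within {0..1/2})"
      by (simp only: mult.assoc)
  qed simp
  then have 1: "((\<lambda>x. ?F x * (\<i> * complex_of_real \<xi>) + complex_of_real (hb x) * E \<xi> x)
      has_integral 0) {0..1/2}" by (simp add: gb_zero)
  have 2: "((\<lambda>x. ?F x * (\<i> * complex_of_real \<xi>)) has_integral ghat \<xi> * (\<i> * complex_of_real \<xi>)) {0..1/2}"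
    unfolding ghat_def
    by (intro has_integral_mult_left integrable_integral integrable_continuous_interval cont_gE)
  have 3: "((\<lambda>x. complex_of_real (hb x) * E \<xi> x) has_integral 0 - ghat \<xi> * (\<i> * complex_of_real \<xi>)) {0..1/2}"
    using has_integral_diff[OF 1 2] by simp
  show ?thesis unfolding fourier_hb_interval using integral_unique[OF 3] by simp
qed

lemma ghat_cnj: "cnj (ghat (-\<xi>)) = ghat \<xi>"
  unfolding ghat_def integral_cnj by (simp add: E_def exp_cnj)




definition GG :: real where "GG = integral {0..1/2} gb"

lemma GG_pos: "GG > 0"
proof -
  have "integral {0..1/2::real} (\<lambda>_. 0::real) < integral {0..1/2} gb"
    by (rule integral_less_real) (auto intro: cont_gb gb_pos)
  then show ?thesis by (simp add: GG_def)
qed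

lemma gb_int: "(gb has_integral GG) {0..1/2}"
  unfolding GG_def by (intro integrable_integral integrable_continuous_interval cont_gb)

lemma ghat_int: "((\<lambda>x. complex_of_real (gb x) * E \<xi> x) has_integral ghat \<xi>) {0..1/2}"
  unfolding ghat_def by (intro integrable_integral integrable_continuous_interval cont_gE)

lemma Re_gE: "Re (E \<xi> x) = cos (\<xi> * x)"
  by (simp add: E_def Re_exp Im_exp)

lemma Im_gE: "Im (E \<xi> x) = sin (\<xi> * x)"
  by (simp add: E_def Re_exp Im_exp)

lemma absprod: "\<bar>\<xi>\<bar> \<le> 1 \<Longrightarrow> (x::real) \<in> {0..1/2} \<Longrightarrow> \<bar>\<xi> * x\<bar> \<le> 1/2"
proof -
  assume a: "\<bar>\<xi>\<bar> \<le> 1" "x \<in> {0..1/2}"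
  then have "\<bar>\<xi>\<bar> * \<bar>x\<bar> \<le> 1 * (1/2)" by (intro mult_mono) auto
  then show ?thesis by (simp add: abs_mult)
qed

lemma Re_ghat: assumes "\<bar>\<xi>\<bar> \<le> 1" shows "Re (ghat \<xi>) \<ge> GG * cos (1/2)"
proof -
  have 1: "((\<lambda>x. gb x * cos (\<xi> * x)) has_integral Re (ghat \<xi>)) {0..1/2}"
    using has_integral_Re[OF ghat_int[of \<xi>]] by (simp add: Re_gE)
  have 2: "((\<lambda>x. gb x * cos (1/2)) has_integral GG * cos (1/2)) {0..1/2}"
    by (rule has_integral_mult_left[OF gb_int])
  show ?thesis
  proof (rule has_integral_le[OF 2 1])
    fix x :: real assume x: "x \<in> {0..1/2}"
    have "cos (1/2) \<le> cos \<bar>\<xi> * x\<bar>"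
      using absprod[OF assms x] pi_gt3 by (intro cos_monotone_0_pi_le) auto
    then show "gb x * cos (1/2) \<le> gb x * cos (\<xi> * x)"
      by (intro mult_left_mono gb_nonneg) simp
  qed
qed

lemma Im_ghat: assumes "\<bar>\<xi>\<bar> \<le> 1" shows "\<bar>Im (ghat \<xi>)\<bar> \<le> GG / 2"
proof -
  have 1: "((\<lambda>x. gb x * sin (\<xi> * x)) has_integral Im (ghat \<xi>)) {0..1/2}"
    using has_integral_Im[OF ghat_int[of \<xi>]] by (simp add: Im_gE)
  have 2: "((\<lambda>x. gb x * (1/2)) has_integral GG * (1/2)) {0..1/2}"
    by (rule has_integral_mult_left[OF gb_int])
  have 3: "((\<lambda>x. gb x * (-1/2)) has_integral GG * (-1/2)) {0..1/2}"
    by (rule has_integral_mult_left[OF gb_int])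
  have s: "\<bar>sin (\<xi> * x)\<bar> \<le> 1/2" if "x \<in> {0..1/2}" for x :: real
    using abs_sin_x_le_abs_x[of "\<xi> * x"] absprod[OF assms that] by linarith
  have "Im (ghat \<xi>) \<le> GG * (1/2)"
  proof (rule has_integral_le[OF 1 2])
    fix x :: real assume x: "x \<in> {0..1/2}"
    show "gb x * sin (\<xi> * x) \<le> gb x * (1/2)"
      using s[OF x] by (intro mult_left_mono gb_nonneg) auto
  qed
  moreover have "GG * (-1/2) \<le> Im (ghat \<xi>)"
  proof (rule has_integral_le[OF 3 1])
    fix x :: real assume x: "x \<in> {0..1/2}"
    show "gb x * (-1/2) \<le> gb x * sin (\<xi> * x)"
      using s[OF x] by (intro mult_left_mono gb_nonneg) auto
  qed
  ultimately show ?thesis by auto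
qed

lemma Re_ghat_sq: assumes "\<bar>\<xi>\<bar> \<le> 1" shows "Re ((ghat \<xi>)\<^sup>2) \<ge> GG\<^sup>2 / 2"
proof -
  have c0: "cos (1/2::real) > 0" using pi_gt3 by (intro cos_gt_zero) auto
  have "\<bar>sin (1/2::real)\<bar> \<le> 1/2" using abs_sin_x_le_abs_x[of "1/2"] by simp
  then have "\<bar>sin (1/2::real)\<bar>\<^sup>2 \<le> (1/2)\<^sup>2" by (intro power_mono) auto
  then have "(sin (1/2::real))\<^sup>2 \<le> 1/4" by (simp add: power2_eq_square)
  then have c1: "(cos (1/2::real))\<^sup>2 \<ge> 3/4" using sin_cos_squared_add[of "1/2::real"] by linarith
  have r: "Re (ghat \<xi>) \<ge> GG * cos (1/2)" using Re_ghat[OF assms] .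
  have r0: "GG * cos (1/2) \<ge> 0" using GG_pos c0 by simp
  have "(Re (ghat \<xi>))\<^sup>2 \<ge> (GG * cos (1/2))\<^sup>2"
    using r r0 by (intro power_mono) auto
  also have "(GG * cos (1/2))\<^sup>2 = GG\<^sup>2 * (cos (1/2))\<^sup>2" by (simp add: power_mult_distrib)
  finally have a: "(Re (ghat \<xi>))\<^sup>2 \<ge> GG\<^sup>2 * (3/4)"
    using c1 by (meson dual_order.trans mult_left_mono zero_le_power2)
  have "\<bar>Im (ghat \<xi>)\<bar>\<^sup>2 \<le> (GG/2)\<^sup>2"
    using Im_ghat[OF assms] by (intro power_mono) auto
  then have b: "(Im (ghat \<xi>))\<^sup>2 \<le> GG\<^sup>2 / 4" by (simp add: power_divide)
  have "Re ((ghat \<xi>)\<^sup>2) = (Re (ghat \<xi>))\<^sup>2 - (Im (ghat \<xi>))\<^sup>2"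
    by (simp add: power2_eq_square)
  then show ?thesis using a b by linarith
qed



lemma cont_ghat: "continuous_on S ghat"
proof -
  have cg: "continuous_on (UNIV \<times> cbox 0 (1/2)) (\<lambda>p. gb (snd p))"
    by (rule continuous_on_compose2[OF cont_gb[of UNIV] continuous_on_snd[OF continuous_on_id]]) auto
  have "continuous_on (UNIV \<times> cbox 0 (1/2)) (\<lambda>p. complex_of_real (gb (snd p)) * E (fst p) (snd p))"
    unfolding E_def using cg by (intro continuous_intros) (auto intro: continuous_on_of_real)
  then have "continuous_on (UNIV \<times> cbox 0 (1/2)) (\<lambda>(\<xi>, x). complex_of_real (gb x) * E \<xi> x)"
    by (simp add: case_prod_beta)
  from integral_continuous_on_param[OF this]
  have "continuous_on UNIV ghat" unfolding ghat_def by (simp add: cbox_interval)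
  then show ?thesis by (rule continuous_on_subset) simp
qed

lemma integrand_eq:
  assumes "\<kappa> \<ge> 1"
  shows "cnj (fourier hb (-\<xi>)) * fourier hb \<xi> / complex_of_real (\<xi>\<^sup>2 + \<kappa>)
     = - (complex_of_real (\<xi>\<^sup>2 / (\<xi>\<^sup>2 + \<kappa>)) * (ghat \<xi>)\<^sup>2)"
proof -
  have c: "cnj (fourier hb (-\<xi>)) = - (\<i> * complex_of_real \<xi>) * ghat \<xi>"
    unfolding fourier_hb by (simp add: ghat_cnj)
  have "cnj (fourier hb (-\<xi>)) * fourier hb \<xi> = - (complex_of_real (\<xi>\<^sup>2) * (ghat \<xi>)\<^sup>2)"
    unfolding c fourier_hb by (simp add: power2_eq_square algebra_simps ghat_cnj)
  then show ?thesis by (simp add: of_real_divide)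
qed

lemma int_sq: "((\<lambda>x::real. x\<^sup>2 * c) has_integral (2/3 * c)) {-1..1}"
proof -
  have "((\<lambda>x::real. x\<^sup>2 * c) has_integral (1^3/3 * c - (-1)^3/3 * c)) {-1..1}"
  proof (rule fundamental_theorem_of_calculus)
    fix x :: real assume "x \<in> {-1..1}"
    have "((\<lambda>x::real. x^3/3 * c) has_real_derivative x\<^sup>2 * c) (at x within {-1..1})"
      by (auto intro!: derivative_eq_intros simp: power2_eq_square)
    then show "((\<lambda>x::real. x^3/3 * c) has_vector_derivative x\<^sup>2 * c) (at x within {-1..1})"
      by (simp add: has_real_derivative_iff_has_vector_derivative)
  qed simp
  then show ?thesis by simp
qed



theorem lemma3p3:
  fixes \<kappa> :: real
  assumes "1 \<le> \<kappa>" and "\<kappa> \<le> 2"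
  shows "\<exists>h :: real \<Rightarrow> real. smooth_real h \<and> compact (tsupp h) \<and> tsupp h \<subseteq> {0..} \<and>
    (let I = integral {-1..1::real}
       (\<lambda>\<xi>. cnj (fourier h (-\<xi>)) * fourier h \<xi> / complex_of_real (\<xi>\<^sup>2 + \<kappa>))
     in Im I = 0 \<and> Re I < 0)"
proof (intro exI[of _ hb] conjI)
  show "smooth_real hb" by (rule smooth_hb)
  show "compact (tsupp hb)" by (rule compact_tsupp_hb)
  show "tsupp hb \<subseteq> {0..}" using tsupp_hb by auto
  define W where "W \<xi> = complex_of_real (\<xi>\<^sup>2 / (\<xi>\<^sup>2 + \<kappa>)) * (ghat \<xi>)\<^sup>2" for \<xi>
  have eq: "(\<lambda>\<xi>. cnj (fourier hb (-\<xi>)) * fourier hb \<xi> / complex_of_real (\<xi>\<^sup>2 + \<kappa>)) = (\<lambda>\<xi>. - W \<xi>)"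
    using integrand_eq[OF assms(1)] by (simp add: W_def fun_eq_iff)
  have pos: "\<xi>\<^sup>2 + \<kappa> > 0" for \<xi> :: real using assms(1) by (smt (verit) zero_le_power2)
  have nz: "\<xi>\<^sup>2 + \<kappa> = 0 \<longleftrightarrow> False" for \<xi> :: real using pos[of \<xi>] by simp
  have "continuous_on {-1..1} W"
    unfolding W_def using pos
    by (intro continuous_intros cont_ghat) (auto intro: continuous_on_of_real intro!: continuous_intros simp: nz)
  then have hW: "(W has_integral integral {-1..1} W) {-1..1}"
    by (intro integrable_integral integrable_continuous_interval)
  define IW where "IW = integral {-1..1} W"
  have hI: "((\<lambda>\<xi>. - W \<xi>) has_integral - IW) {-1..1}"
    using has_integral_neg[OF hW] by (simp add: IW_def)
  have Wm: "W (-\<xi>) = cnj (W \<xi>)" for \<xi>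
  proof -
    have "ghat (-\<xi>) = cnj (ghat \<xi>)" using ghat_cnj[of "-\<xi>"] by (simp only: minus_minus)
    then show ?thesis by (simp add: W_def)
  qed
  have ImIW: "Im IW = 0"
  proof -
    have a: "((\<lambda>\<xi>. Im (W \<xi>)) has_integral Im IW) {-1..1}"
      using has_integral_Im[OF hW] by (simp add: IW_def)
    then have "((\<lambda>\<xi>. Im (W (-\<xi>))) has_integral Im IW) {-1..1}"
      using iffD2[OF has_integral_reflect_real[of "\<lambda>\<xi>. Im (W \<xi>)" "Im IW" 1 "-1"] a] by simp
    then have "((\<lambda>\<xi>. - Im (W \<xi>)) has_integral Im IW) {-1..1}" by (simp add: Wm)
    moreover have "((\<lambda>\<xi>. - Im (W \<xi>)) has_integral - Im IW) {-1..1}" by (rule has_integral_neg[OF a])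
    ultimately have "Im IW = - Im IW" by (rule has_integral_unique)
    then show ?thesis by simp
  qed
  have ReIW: "Re IW \<ge> 2/3 * (GG\<^sup>2 / 6)"
  proof (rule has_integral_le[OF int_sq])
    show "((\<lambda>\<xi>. Re (W \<xi>)) has_integral Re IW) {-1..1}"
      using has_integral_Re[OF hW] by (simp add: IW_def)
  next
    fix \<xi> :: real assume x: "\<xi> \<in> {-1..1}"
    then have a: "\<bar>\<xi>\<bar> \<le> 1" by auto
    have r: "Re ((ghat \<xi>)\<^sup>2) \<ge> GG\<^sup>2 / 2" by (rule Re_ghat_sq[OF a])
    have "\<xi>\<^sup>2 \<le> 1" using a by (simp add: abs_square_le_1)
    then have d: "\<xi>\<^sup>2 + \<kappa> \<le> 3" using assms by linarith
    have q: "\<xi>\<^sup>2 / (\<xi>\<^sup>2 + \<kappa>) \<ge> \<xi>\<^sup>2 / 3"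
      using d pos[of \<xi>] by (intro divide_left_mono) auto
    have "\<xi>\<^sup>2 * (GG\<^sup>2 / 6) = (\<xi>\<^sup>2 / 3) * (GG\<^sup>2 / 2)" by simp
    also have "\<dots> \<le> (\<xi>\<^sup>2 / (\<xi>\<^sup>2 + \<kappa>)) * Re ((ghat \<xi>)\<^sup>2)"
      using q r pos[of \<xi>] by (intro mult_mono) auto
    also have "\<dots> = Re (W \<xi>)" by (simp add: W_def)
    finally show "\<xi>\<^sup>2 * (GG\<^sup>2 / 6) \<le> Re (W \<xi>)" .
  qed
  have "GG\<^sup>2 > 0" using GG_pos by simp
  then have ReI: "Re IW > 0" using ReIW by linarith
  have I: "integral {-1..1::real} (\<lambda>\<xi>. cnj (fourier hb (-\<xi>)) * fourier hb \<xi> / complex_of_real (\<xi>\<^sup>2 + \<kappa>)) = - IW"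
    unfolding eq using hI by (rule integral_unique)
  show "let I = integral {-1..1::real}
       (\<lambda>\<xi>. cnj (fourier hb (-\<xi>)) * fourier hb \<xi> / complex_of_real (\<xi>\<^sup>2 + \<kappa>))
     in Im I = 0 \<and> Re I < 0"
    unfolding I Let_def using ImIW ReI by simp
qed


end
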